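(* Let $G$ be a graph on $n$ vertices, let $j,r$ be positive integers and let $p=p_r(G)$. Then $\sum_{S\in V(G)^j}|N(S)|^r\ge n^{j+r}p^{jr}$. If moreover $p>4jn^{-1/r}$, then $\sum_{S\in V(G)_j}|N(S)|^r\ge\frac{1}{2^{j+1}}n^{j+r}p^{jr}$.
   Context: All graphs are finite and simple. $p_r(G)=t_{K_{1,r}}(G)^{1/r}=\frac1n\left(\frac1n\sum_{v\in V(G)}d(v)^r\right)^{1/r}$ where $n=|G|$. For a set $W$ and positive integer $k$, $W^k$ is the set of sequences of length $k$ of elements of $W$ (repetitions allowed) and $W_k$ is the set of such sequences whose $k$ elements are pairwise distinct. For a sequence $S$ in $V(G)$, $N(S)$ is the set of vertices adjacent to every vertex of $S$. *)

theory Defs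
  imports "HOL-Analysis.Analysis"
begin

definition simple_graph :: "'a set \<Rightarrow> ('a \<Rightarrow> 'a \<Rightarrow> bool) \<Rightarrow> bool" where
  "simple_graph V E \<longleftrightarrow> finite V \<and> (\<forall>u v. E u v \<longrightarrow> u \<in> V \<and> v \<in> V)
     \<and> (\<forall>u v. E u v \<longrightarrow> E v u) \<and> (\<forall>v. \<not> E v v)"

definition degree :: "'a set \<Rightarrow> ('a \<Rightarrow> 'a \<Rightarrow> bool) \<Rightarrow> 'a \<Rightarrow> nat" where
  "degree V E v = card {u \<in> V. E v u}"

definition p_r :: "nat \<Rightarrow> 'a set \<Rightarrow> ('a \<Rightarrow> 'a \<Rightarrow> bool) \<Rightarrow> real" where
  "p_r r V E = (1 / real (card V)) *
     ((1 / real (card V)) * (\<Sum>v\<in>V. real (degree V E v) ^ r)) powr (1 / real r)"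

definition seqs :: "'a set \<Rightarrow> nat \<Rightarrow> 'a list set" where
  "seqs W k = {S. length S = k \<and> set S \<subseteq> W}"

definition dseqs :: "'a set \<Rightarrow> nat \<Rightarrow> 'a list set" where
  "dseqs W k = {S. length S = k \<and> set S \<subseteq> W \<and> distinct S}"

definition common_nbhd :: "'a set \<Rightarrow> ('a \<Rightarrow> 'a \<Rightarrow> bool) \<Rightarrow> 'a list \<Rightarrow> 'a set" where
  "common_nbhd V E S = {v \<in> V. \<forall>u\<in>set S. E u v}"

end

theory Submission
  imports Defs
begin

lemma double_count:
  assumes "finite A" "finite B"
  shows "(\<Sum>a\<in>A. card {b\<in>B. R a b}) = (\<Sum>b\<in>B. card {a\<in>A. R a b})"
proof -
  have "(\<Sum>a\<in>A. card {b\<in>B. R a b}) = (\<Sum>a\<in>A. \<Sum>b\<in>B. if R a b then 1 else (0::nat))"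
    using assms by (simp add: sum.If_cases Int_def conj_commute)
  also have "\<dots> = (\<Sum>b\<in>B. \<Sum>a\<in>A. if R a b then 1 else (0::nat))"
    by (rule sum.swap)
  also have "\<dots> = (\<Sum>b\<in>B. card {a\<in>A. R a b})"
    using assms by (simp add: sum.If_cases Int_def conj_commute)
  finally show ?thesis .
qed

lemma finite_seqs: "finite A \<Longrightarrow> finite (seqs A k)"
  unfolding seqs_def using finite_lists_length_eq[of A k] by (simp add: conj_commute)

lemma card_seqs: "finite A \<Longrightarrow> card (seqs A k) = card A ^ k"
  unfolding seqs_def using card_lists_length_eq[of A k] by (simp add: conj_commute)

lemma finite_dseqs: "finite A \<Longrightarrow> finite (dseqs A k)"
  by (rule finite_subset[OF _ finite_seqs[of A k]]) (auto simp: seqs_def dseqs_def)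

lemma aux2: "(S::real) = a + a - b - b \<Longrightarrow> S = 2 * (a - b)" by (simp add: algebra_simps)

lemma cheb:
  fixes f :: "'b \<Rightarrow> real"
  assumes "finite X" "\<And>x. x \<in> X \<Longrightarrow> f x \<ge> 0"
  shows "(\<Sum>x\<in>X. f x) * (\<Sum>x\<in>X. f x ^ k) \<le> real (card X) * (\<Sum>x\<in>X. f x ^ Suc k)"
proof -
  let ?S = "(\<Sum>x\<in>X. \<Sum>y\<in>X. (f x - f y) * (f x ^ k - f y ^ k))"
  have e: "\<And>x y. (f x - f y) * (f x ^ k - f y ^ k) = f x ^ Suc k + f y ^ Suc k - f x * f y ^ k - f y * f x ^ k"
    by (simp add: left_diff_distrib right_diff_distrib)
  have s1: "(\<Sum>x\<in>X. \<Sum>y\<in>X. f x ^ Suc k) = real (card X) * (\<Sum>x\<in>X. f x ^ Suc k)"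
    by (simp add: sum_distrib_left)
  have s2: "(\<Sum>x\<in>X. \<Sum>y\<in>X. f y ^ Suc k) = real (card X) * (\<Sum>x\<in>X. f x ^ Suc k)"
    by simp
  have s3: "(\<Sum>x\<in>X. \<Sum>y\<in>X. f x * f y ^ k) = (\<Sum>x\<in>X. f x) * (\<Sum>x\<in>X. f x ^ k)"
    unfolding sum_product by (rule refl)
  have s4: "(\<Sum>x\<in>X. \<Sum>y\<in>X. f y * f x ^ k) = (\<Sum>x\<in>X. f x) * (\<Sum>x\<in>X. f x ^ k)"
    unfolding sum_product by (rule sum.swap)
  have "?S = (\<Sum>x\<in>X. \<Sum>y\<in>X. f x ^ Suc k) + (\<Sum>x\<in>X. \<Sum>y\<in>X. f y ^ Suc k)
     - (\<Sum>x\<in>X. \<Sum>y\<in>X. f x * f y ^ k) - (\<Sum>x\<in>X. \<Sum>y\<in>X. f y * f x ^ k)"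
    unfolding e by (simp only: sum_subtractf sum.distrib)
  then have Seq: "?S = 2 * (real (card X) * (\<Sum>x\<in>X. f x ^ Suc k) - (\<Sum>x\<in>X. f x) * (\<Sum>x\<in>X. f x ^ k))"
    unfolding s1 s2 s3 s4 by (rule aux2)
  have "?S \<ge> 0"
  proof (intro sum_nonneg)
    fix x y assume "x \<in> X" "y \<in> X"
    then have hx: "f x \<ge> 0" and hy: "f y \<ge> 0" using assms by auto
    show "(f x - f y) * (f x ^ k - f y ^ k) \<ge> 0"
    proof (cases "f x \<le> f y")
      case True
      have "f x ^ k \<le> f y ^ k" by (rule power_mono[OF True hx])
      then show ?thesis using True by (simp add: mult_nonpos_nonpos)
    next
      case False
      then have le: "f y \<le> f x" by simp
      have "f y ^ k \<le> f x ^ k" by (rule power_mono[OF le hy])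
      then show ?thesis using le by simp
    qed
  qed
  then show ?thesis unfolding Seq by simp
qed

lemma power_mean:
  fixes f :: "'b \<Rightarrow> real"
  assumes "finite X" "\<And>x. x \<in> X \<Longrightarrow> f x \<ge> 0"
  shows "(\<Sum>x\<in>X. f x) ^ Suc k \<le> real (card X) ^ k * (\<Sum>x\<in>X. f x ^ Suc k)"
proof (induction k)
  case 0
  then show ?case by simp
next
  case (Suc k)
  have s0: "(\<Sum>x\<in>X. f x) \<ge> 0" using assms by (simp add: sum_nonneg)
  have "(\<Sum>x\<in>X. f x) ^ Suc (Suc k) = (\<Sum>x\<in>X. f x) * (\<Sum>x\<in>X. f x) ^ Suc k" by simp
  also have "\<dots> \<le> (\<Sum>x\<in>X. f x) * (real (card X) ^ k * (\<Sum>x\<in>X. f x ^ Suc k))"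
    using Suc s0 by (rule mult_left_mono)
  also have "\<dots> = real (card X) ^ k * ((\<Sum>x\<in>X. f x) * (\<Sum>x\<in>X. f x ^ Suc k))" by simp
  also have "\<dots> \<le> real (card X) ^ k * (real (card X) * (\<Sum>x\<in>X. f x ^ Suc (Suc k)))"
    using cheb[OF assms, where k="Suc k"] by (simp add: mult_left_mono)
  also have "\<dots> = real (card X) ^ Suc k * (\<Sum>x\<in>X. f x ^ Suc (Suc k))" by simp
  finally show ?case .
qed

lemma dseqs_bound:
  assumes "finite A" "j \<ge> 1"
  shows "real (card (dseqs A j)) \<ge> (real (card A) ^ j - (2 * real j) ^ j) / 2 ^ j"
proof (cases "card A < 2 * j")
  case True
  then have "real (card A) ^ j \<le> (2 * real j) ^ j"
    by (intro power_mono) auto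
  then have "(real (card A) ^ j - (2 * real j) ^ j) / 2 ^ j \<le> 0"
    by (simp add: divide_nonpos_pos)
  then show ?thesis by (meson of_nat_0_le_iff order_trans)
next
  case False
  let ?m = "card A"
  have eq: "dseqs A j = {xs. length xs = j \<and> distinct xs \<and> set xs \<subseteq> A}"
    by (auto simp: dseqs_def)
  have "card (dseqs A j) = \<Prod>{?m - j + 1 .. ?m}"
    unfolding eq using False assms by (intro card_lists_distinct_length_eq) auto
  also have "\<dots> \<ge> (\<Prod>i\<in>{?m - j + 1 .. ?m}. ?m - j + 1)"
    by (intro prod_mono) auto
  finally have "card (dseqs A j) \<ge> (?m - j + 1) ^ j"
    using False by (simp add: prod_constant)
  then have c1: "real (card (dseqs A j)) \<ge> real (?m - j + 1) ^ j"
    by (metis of_nat_le_iff of_nat_power)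
  have "real (?m - j + 1) \<ge> real ?m / 2" using False by auto
  then have "real (?m - j + 1) ^ j \<ge> (real ?m / 2) ^ j"
    by (intro power_mono) auto
  moreover have "(real ?m / 2) ^ j \<ge> (real (card A) ^ j - (2 * real j) ^ j) / 2 ^ j"
    by (simp add: power_divide divide_right_mono)
  ultimately show ?thesis using c1 by linarith
qed

context
  fixes V :: "'a set" and E :: "'a \<Rightarrow> 'a \<Rightarrow> bool"
  assumes G: "simple_graph V E"
begin

lemma finV: "finite V" using G by (simp add: simple_graph_def)

lemma N_sub: "common_nbhd V E S \<subseteq> V" by (auto simp: common_nbhd_def)

lemma finN: "finite (common_nbhd V E S)" using N_sub finV finite_subset by blast

lemma seqs_N: "{T\<in>seqs V r. \<forall>u\<in>set S. \<forall>v\<in>set T. E u v} = seqs (common_nbhd V E S) r"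
  by (auto simp: seqs_def common_nbhd_def)

lemma seqs_N': "{S\<in>seqs V j. \<forall>u\<in>set S. \<forall>v\<in>set T. E u v} = seqs (common_nbhd V E T) j"
  using G by (auto simp: seqs_def common_nbhd_def simple_graph_def)

lemma dseqs_N': "{S\<in>dseqs V j. \<forall>u\<in>set S. \<forall>v\<in>set T. E u v} = dseqs (common_nbhd V E T) j"
  using G by (auto simp: dseqs_def common_nbhd_def simple_graph_def)

lemma swap_seqs:
  "(\<Sum>S\<in>seqs V j. card (common_nbhd V E S) ^ r) = (\<Sum>T\<in>seqs V r. card (common_nbhd V E T) ^ j)"
proof -
  have "(\<Sum>S\<in>seqs V j. card (common_nbhd V E S) ^ r)
      = (\<Sum>S\<in>seqs V j. card {T\<in>seqs V r. \<forall>u\<in>set S. \<forall>v\<in>set T. E u v})"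
    by (simp add: seqs_N card_seqs finN)
  also have "\<dots> = (\<Sum>T\<in>seqs V r. card {S\<in>seqs V j. \<forall>u\<in>set S. \<forall>v\<in>set T. E u v})"
    by (rule double_count) (auto intro: finite_seqs finV)
  also have "\<dots> = (\<Sum>T\<in>seqs V r. card (common_nbhd V E T) ^ j)"
    by (simp add: seqs_N' card_seqs finN)
  finally show ?thesis .
qed

lemma swap_dseqs:
  "(\<Sum>S\<in>dseqs V j. card (common_nbhd V E S) ^ r) = (\<Sum>T\<in>seqs V r. card (dseqs (common_nbhd V E T) j))"
proof -
  have "(\<Sum>S\<in>dseqs V j. card (common_nbhd V E S) ^ r)
      = (\<Sum>S\<in>dseqs V j. card {T\<in>seqs V r. \<forall>u\<in>set S. \<forall>v\<in>set T. E u v})"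
    by (simp add: seqs_N card_seqs finN)
  also have "\<dots> = (\<Sum>T\<in>seqs V r. card {S\<in>dseqs V j. \<forall>u\<in>set S. \<forall>v\<in>set T. E u v})"
    by (rule double_count) (auto intro: finite_seqs finite_dseqs finV)
  also have "\<dots> = (\<Sum>T\<in>seqs V r. card (dseqs (common_nbhd V E T) j))"
    by (simp add: dseqs_N')
  finally show ?thesis .
qed

lemma sum_deg:
  "(\<Sum>T\<in>seqs V r. card (common_nbhd V E T)) = (\<Sum>v\<in>V. degree V E v ^ r)"
proof -
  have "(\<Sum>T\<in>seqs V r. card (common_nbhd V E T)) = (\<Sum>T\<in>seqs V r. card {v\<in>V. \<forall>u\<in>set T. E u v})"
    by (simp add: common_nbhd_def)
  also have "\<dots> = (\<Sum>v\<in>V. card {T\<in>seqs V r. \<forall>u\<in>set T. E u v})"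
    by (rule double_count) (auto intro: finite_seqs finV)
  also have "\<dots> = (\<Sum>v\<in>V. card (seqs {u\<in>V. E v u} r))"
  proof (rule sum.cong)
    fix v assume "v \<in> V"
    have "{T\<in>seqs V r. \<forall>u\<in>set T. E u v} = seqs {u\<in>V. E v u} r"
      using G by (auto simp: seqs_def simple_graph_def)
    then show "card {T\<in>seqs V r. \<forall>u\<in>set T. E u v} = card (seqs {u\<in>V. E v u} r)" by simp
  qed simp
  also have "\<dots> = (\<Sum>v\<in>V. degree V E v ^ r)"
    using finV by (simp add: card_seqs degree_def)
  finally show ?thesis .
qed

end


lemma M_aux: "((x::real) ^ (r + 1)) ^ Suc k = x ^ (Suc k + r) * (x ^ r) ^ k"
proof -
  have e: "(r+1)*Suc k = (Suc k + r) + r*k" by (simp add: algebra_simps)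
  show ?thesis by (metis power_add power_mult e)
qed

lemma Q_aux: "(a::real) \<noteq> 0 \<Longrightarrow> a * (b / (a * c)) = b / c" by simp

lemma L_aux: "(n::real) > 0 \<Longrightarrow> n ^ (j + r) * (4 * y / n) ^ j = n ^ r * (4 * y) ^ j"
  by (simp add: power_divide power_add)

theorem lemma3p5:
  fixes V :: "'a set" and E :: "'a \<Rightarrow> 'a \<Rightarrow> bool" and j r :: nat
  assumes "simple_graph V E" and "j \<ge> 1" and "r \<ge> 1"
  shows "(\<Sum>S\<in>seqs V j. real (card (common_nbhd V E S)) ^ r)
           \<ge> real (card V) ^ (j + r) * p_r r V E ^ (j * r)
       \<and> (p_r r V E > 4 * real j * real (card V) powr (- 1 / real r) \<longrightarrow>
         (\<Sum>S\<in>dseqs V j. real (card (common_nbhd V E S)) ^ r)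
           \<ge> 1 / 2 ^ (j + 1) * real (card V) ^ (j + r) * p_r r V E ^ (j * r))"
proof -
  note G = assms(1)
  define n where "n = card V"
  define X where "X = seqs V r"
  define F where "F = (\<lambda>T. real (card (common_nbhd V E T)))"
  define D where "D = (\<Sum>v\<in>V. real (degree V E v) ^ r)"
  define A where "A = (\<Sum>T\<in>X. F T ^ j)"
  define p where "p = p_r r V E"
  have finV: "finite V" using finV[OF G] .
  have finX: "finite X" unfolding X_def using finV by (rule finite_seqs)
  have cardX: "card X = n ^ r" unfolding X_def n_def using finV by (rule card_seqs)
  have Fnn: "\<And>T. F T \<ge> 0" unfolding F_def by simp
  have L1: "(\<Sum>S\<in>seqs V j. real (card (common_nbhd V E S)) ^ r) = A"
  proof -
    have "real (\<Sum>S\<in>seqs V j. card (common_nbhd V E S) ^ r) = real (\<Sum>T\<in>seqs V r. card (common_nbhd V E T) ^ j)"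
      using swap_seqs[OF G] by simp
    then show ?thesis unfolding A_def X_def F_def by simp
  qed
  have L2: "(\<Sum>S\<in>dseqs V j. real (card (common_nbhd V E S)) ^ r) = (\<Sum>T\<in>X. real (card (dseqs (common_nbhd V E T) j)))"
  proof -
    have "real (\<Sum>S\<in>dseqs V j. card (common_nbhd V E S) ^ r) = real (\<Sum>T\<in>seqs V r. card (dseqs (common_nbhd V E T) j))"
      using swap_dseqs[OF G] by simp
    then show ?thesis unfolding X_def by simp
  qed
  have SD: "(\<Sum>T\<in>X. F T) = D"
  proof -
    have "real (\<Sum>T\<in>seqs V r. card (common_nbhd V E T)) = real (\<Sum>v\<in>V. degree V E v ^ r)"
      using sum_deg[OF G] by simp
    then show ?thesis unfolding X_def F_def D_def by simp
  qed
  have Dnn: "D \<ge> 0" unfolding D_def by (simp add: sum_nonneg)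
  have Ann: "A \<ge> 0" unfolding A_def using Fnn by (simp add: sum_nonneg)
  show ?thesis
  proof (cases "n = 0")
    case True
    then have "p = 0" unfolding p_def p_r_def n_def by simp
    moreover have "(0::real) powr (- 1 / real r) = 0" by simp
    moreover have z: "real (card V) ^ (j + r) = 0" using True assms(2) unfolding n_def by simp
    ultimately have "\<not> p_r r V E > 4 * real j * real (card V) powr (- 1 / real r)"
      using True unfolding p_def n_def by simp
    moreover have "real (card V) ^ (j + r) * p_r r V E ^ (j * r) \<le> A"
      unfolding z using Ann by simp
    ultimately show ?thesis using L1 by simp
  next
    case False
    then have npos: "real n > 0" by simp
    have pdef: "p = (1 / real n) * (D / real n) powr (1 / real r)"
      unfolding p_def p_r_def n_def D_def by simp
    have pnn: "p \<ge> 0" unfolding pdef using npos by simp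
    have rt: "((D / real n) powr (1 / real r)) ^ r = D / real n"
    proof (cases "D / real n = 0")
      case True show ?thesis unfolding True using assms(3) by simp
    next
      case False
      then have "((D / real n) powr (1 / real r)) ^ r = (D / real n) powr (real r * (1 / real r))"
        by (rule powr_power)
      also have "\<dots> = D / real n" using assms(3) Dnn npos by simp
      finally show ?thesis .
    qed
    have hp: "p ^ r = D / real n ^ (r + 1)"
      unfolding pdef power_mult_distrib rt using npos by (simp add: power_divide field_simps)
    have hpj: "p ^ (j * r) = (D / real n ^ (r + 1)) ^ j"
      unfolding hp[symmetric] by (metis power_mult mult.commute)
    obtain k where jk: "j = Suc k" using assms(2) by (cases j) auto
    have pm: "D ^ j \<le> (real n ^ r) ^ k * A"
      using power_mean[OF finX, where f=F and k=k] Fnn unfolding SD cardX A_def jk by simp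
    have M: "(real n ^ (r + 1)) ^ j = real n ^ (j + r) * (real n ^ r) ^ k"
      unfolding jk by (rule M_aux)
    have Mpos: "(real n ^ r) ^ k > 0" using npos by simp
    have Q_eq: "real n ^ (j + r) * p ^ (j * r) = D ^ j / (real n ^ r) ^ k"
      unfolding hpj power_divide M using npos by (intro Q_aux) simp
    have part1: "real n ^ (j + r) * p ^ (j * r) \<le> A"
      unfolding Q_eq using pm Mpos by (simp add: divide_le_eq mult.commute)
    have part2: "1 / 2 ^ (j + 1) * real n ^ (j + r) * p ^ (j * r) \<le> (\<Sum>T\<in>X. real (card (dseqs (common_nbhd V E T) j)))"
      if hyp: "p > 4 * real j * real n powr (- 1 / real r)"
    proof -
      have e1: "(4 * real j * real n powr (- 1 / real r)) ^ r = (4 * real j) ^ r / real n"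
      proof -
        have "(real n powr (- 1 / real r)) ^ r = real n powr (real r * (- 1 / real r))"
          using npos by (intro powr_power) simp
        also have "\<dots> = real n powr (- 1)" using assms(3) by simp
        also have "\<dots> = 1 / real n" using npos by (simp add: powr_minus_divide)
        finally show ?thesis by (simp add: power_mult_distrib)
      qed
      have h1: "p ^ r > (4 * real j) ^ r / real n"
        unfolding e1[symmetric] using hyp assms(3) npos
        by (intro power_strict_mono) auto
      have "4 * real j \<le> (4 * real j) ^ r"
        using power_increasing[of 1 r "4 * real j"] assms by simp
      then have h2: "p ^ r \<ge> 4 * real j / real n"
      proof -
        have "4 * real j / real n \<le> (4 * real j) ^ r / real n"
          using \<open>4 * real j \<le> (4 * real j) ^ r\<close> npos by (intro divide_right_mono) auto
        then show ?thesis using h1 by linarith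
      qed
      have "(4 * real j / real n) ^ j \<le> (p ^ r) ^ j"
        using h2 npos by (intro power_mono) auto
      moreover have pj: "(p ^ r) ^ j = p ^ (j * r)" by (metis power_mult mult.commute)
      ultimately have "(4 * real j / real n) ^ j \<le> p ^ (j * r)" by simp
      then have "real n ^ (j + r) * (4 * real j / real n) ^ j \<le> real n ^ (j + r) * p ^ (j * r)"
        by (rule mult_left_mono) simp
      moreover have "real n ^ (j + r) * (4 * real j / real n) ^ j = real n ^ r * (4 * real j) ^ j"
        using npos by (rule L_aux)
      moreover have "(4 * real j) ^ j = 2 ^ j * (2 * real j) ^ j"
      proof -
        have "(4 * real j) = 2 * (2 * real j)" by simp
        then show ?thesis by (metis power_mult_distrib)
      qed
      moreover have "(2::real) ^ j \<ge> 2"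
        using power_increasing[of 1 j "2::real"] assms(2) by simp
      ultimately have h3: "real n ^ (j + r) * p ^ (j * r) \<ge> 2 * (real n ^ r * (2 * real j) ^ j)"
      proof -
        have c0: "real n ^ r * (2 * real j) ^ j \<ge> 0" by simp
        have "2 * (real n ^ r * (2 * real j) ^ j) \<le> 2 ^ j * (real n ^ r * (2 * real j) ^ j)"
          using \<open>(2::real) ^ j \<ge> 2\<close> c0 by (rule mult_right_mono)
        also have "\<dots> = real n ^ r * (4 * real j) ^ j"
          unfolding \<open>(4 * real j) ^ j = 2 ^ j * (2 * real j) ^ j\<close> by (rule mult.left_commute)
        finally show ?thesis
          using \<open>real n ^ (j + r) * (4 * real j / real n) ^ j \<le> real n ^ (j + r) * p ^ (j * r)\<close>
            \<open>real n ^ (j + r) * (4 * real j / real n) ^ j = real n ^ r * (4 * real j) ^ j\<close> by linarith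
      qed
      have "(\<Sum>T\<in>X. real (card (dseqs (common_nbhd V E T) j))) \<ge> (\<Sum>T\<in>X. (F T ^ j - (2 * real j) ^ j) / 2 ^ j)"
        unfolding F_def
        by (intro sum_mono dseqs_bound finN[OF G] assms(2))
      also have "(\<Sum>T\<in>X. (F T ^ j - (2 * real j) ^ j) / 2 ^ j) = (A - real n ^ r * (2 * real j) ^ j) / 2 ^ j"
        unfolding A_def by (simp add: sum_divide_distrib[symmetric] sum_subtractf cardX)
      finally have B: "(\<Sum>T\<in>X. real (card (dseqs (common_nbhd V E T) j))) \<ge> (A - real n ^ r * (2 * real j) ^ j) / 2 ^ j" .
      define Q where "Q = real n ^ (j + r) * p ^ (j * r)"
      define c where "c = real n ^ r * (2 * real j) ^ j"
      have eqQ: "1 / 2 ^ (j + 1) * Q = (Q / 2) / 2 ^ j" by simp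
      have "Q / 2 \<le> A - c" using part1 h3 unfolding Q_def c_def by linarith
      then have "(Q / 2) / 2 ^ j \<le> (A - c) / 2 ^ j" by (rule divide_right_mono) simp
      then have "1 / 2 ^ (j + 1) * Q \<le> (A - c) / 2 ^ j" unfolding eqQ .
      moreover have "1 / 2 ^ (j + 1) * real n ^ (j + r) * p ^ (j * r) = 1 / 2 ^ (j + 1) * Q"
        unfolding Q_def by (rule mult.assoc)
      ultimately show ?thesis using B unfolding c_def by linarith
    qed
    show ?thesis
    proof (intro conjI impI)
      show "real (card V) ^ (j + r) * p_r r V E ^ (j * r) \<le> (\<Sum>S\<in>seqs V j. real (card (common_nbhd V E S)) ^ r)"
        unfolding L1 using part1 unfolding n_def p_def .
    next
      assume h: "p_r r V E > 4 * real j * real (card V) powr (- 1 / real r)"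
      show "1 / 2 ^ (j + 1) * real (card V) ^ (j + r) * p_r r V E ^ (j * r) \<le> (\<Sum>S\<in>dseqs V j. real (card (common_nbhd V E S)) ^ r)"
        unfolding L2 using part2[OF h[folded n_def p_def]] unfolding n_def p_def .
    qed
  qed
qed

end
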